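(* Let $A,C\in\mathbb{C}^{n\times n}$ be Hermitian positive semidefinite, and let $L,M$ be any complex matrices with $n$ rows such that $A=LL^*$ and $C=MM^*$. Then $I+AC$ is invertible and \[ \|(I+AC)^{-1}\|\le 1+\frac{\min\{\|A\|^{1/2}\|L^*C\|,\ \|C\|^{1/2}\|AM\|\}}{1+\min\sigma(AC)}. \]
   Context: $\|\cdot\|$ is the spectral (operator) norm, $\sigma(\cdot)$ the spectrum. For $A,C$ Hermitian positive semidefinite it is known that $\sigma(AC)=\sigma(CA)\subseteq[0,\infty)$, so $\min\sigma(AC)\ge 0$ is well defined. *)

theory Defs
  imports "HOL-Analysis.Analysis"
begin

text \<open>Complex matrices are represented as complex^'c^'r (r rows, c columns).\<close>

definition cinner :: "complex^'n \<Rightarrow> complex^'n \<Rightarrow> complex" where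
  "cinner x y = (\<Sum>i\<in>UNIV. cnj (x$i) * y$i)"

definition adj :: "complex^'c^'r \<Rightarrow> complex^'r^'c" where
  "adj A = (\<chi> i j. cnj (A$j$i))"

definition hermitian_psd :: "complex^'n^'n \<Rightarrow> bool" where
  "hermitian_psd A \<longleftrightarrow> adj A = A \<and>
     (\<forall>x. Im (cinner x (A *v x)) = 0 \<and> Re (cinner x (A *v x)) \<ge> 0)"

definition opnorm :: "complex^'c^'r \<Rightarrow> real" where
  "opnorm A = onorm (\<lambda>x. A *v x)"

definition spectrum :: "complex^'n^'n \<Rightarrow> complex set" where
  "spectrum A = {z. \<not> invertible (A - mat z)}"

text \<open>Smallest point of the spectrum, which is real for products of PSD matrices.\<close>
definition min_spectrum :: "complex^'n^'n \<Rightarrow> real" where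
  "min_spectrum A = Min (Re ` spectrum A)"

end

theory Submission
  imports Defs
begin

lemma adj_adj[simp]: "adj (adj P) = P"
  by (simp add: adj_def vec_eq_iff)

lemma adj_mult: "adj (P ** Q) = adj Q ** adj P"
  by (simp add: adj_def vec_eq_iff matrix_matrix_mult_def mult.commute)

lemma adj_add: "adj (P + Q) = adj P + adj Q"
  by (simp add: adj_def vec_eq_iff)

lemma adj_mat: "adj (mat 1 :: complex^'n^'n) = mat 1"
  by (simp add: adj_def vec_eq_iff mat_def)

lemma cinner_adj: "cinner x (P *v y) = cinner (adj P *v x) y"
  apply (simp add: cinner_def adj_def matrix_vector_mult_def sum_distrib_left sum_distrib_right)
  apply (subst sum.swap)
  apply (simp add: mult_ac)
  done

lemma inner_cinner: "x \<bullet> y = Re (cinner x y)"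
  by (simp add: inner_vec_def cinner_def inner_complex_def)

lemma inner_adj: "x \<bullet> (P *v y) = (adj P *v x) \<bullet> y"
  by (simp add: inner_cinner cinner_adj)

lemma mat_mulv: "(mat z :: complex^'n^'n) *v v = z *s v"
proof -
  have "\<And>i. (\<Sum>j\<in>UNIV. (if i = j then z else 0) * v $ j) = z * v $ i"
  proof -
    fix i
    have "(\<Sum>j\<in>UNIV. (if i = j then z else 0) * v $ j) = (\<Sum>j\<in>UNIV. if i = j then z * v $ j else 0)"
      by (rule sum.cong) auto
    then show "(\<Sum>j\<in>UNIV. (if i = j then z else 0) * v $ j) = z * v $ i" by simp
  qed
  then show ?thesis unfolding vec_eq_iff by (simp add: matrix_vector_mult_def mat_def)
qed

lemma scaleR_vc: "(r::real) *\<^sub>R (v::complex^'n) = complex_of_real r *s v"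
  unfolding vec_eq_iff by (simp add: scaleR_conv_of_real[where 'a=complex])

lemma mv_scaleR: "(X::complex^'k^'j) *v ((c::real) *\<^sub>R s) = c *\<^sub>R (X *v s)"
  by (simp add: scaleR_vc vector_scalar_commute)

lemma inner_scale_same: "((a::complex) *s x) \<bullet> (b *s (x::complex^'n)) = Re (cnj a * b) * (x \<bullet> x)"
  by (simp add: inner_vec_def inner_complex_def sum_distrib_left algebra_simps)

lemma opn: "norm (P *v x) \<le> opnorm P * norm x"
  unfolding opnorm_def by (rule onorm) simp

lemma opn_le: "(\<And>x. norm (P *v x) \<le> b * norm x) \<Longrightarrow> opnorm P \<le> b"
  unfolding opnorm_def by (rule onorm_le)

lemma opn_ge0: "0 \<le> opnorm P"
  unfolding opnorm_def by (rule onorm_pos_le) simp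

lemma adj_sq: "(adj P *v x) \<bullet> (adj P *v x) = x \<bullet> (P *v (adj P *v x))"
  using inner_adj[of x P "adj P *v x"] by simp

lemma opnorm_adj_le: "opnorm (adj P) \<le> opnorm P"
proof (rule opn_le)
  fix x
  let ?y = "adj P *v x"
  have "norm ?y ^ 2 = x \<bullet> (P *v ?y)" by (simp add: power2_norm_eq_inner adj_sq)
  also have "\<dots> \<le> norm x * norm (P *v ?y)" by (rule norm_cauchy_schwarz)
  also have "\<dots> \<le> norm x * (opnorm P * norm ?y)" by (simp add: mult_left_mono opn)
  finally have h: "norm ?y * norm ?y \<le> (opnorm P * norm x) * norm ?y" by (simp add: power2_eq_square mult_ac)
  show "norm ?y \<le> opnorm P * norm x"
  proof (cases "norm ?y = 0")
    case True then show ?thesis using opn_ge0[of P] by simp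
  next
    case False then show ?thesis using h by (simp add: mult_le_cancel_right)
  qed
qed

lemma opnorm_adj: "opnorm (adj P) = opnorm P"
  using opnorm_adj_le[of P] opnorm_adj_le[of "adj P"] by simp

lemma opnorm_sqrt: "opnorm L \<le> sqrt (opnorm (L ** adj L))"
proof -
  have "opnorm (adj L) \<le> sqrt (opnorm (L ** adj L))"
  proof (rule opn_le)
    fix x
    let ?y = "adj L *v x"
    have "norm ?y ^ 2 = x \<bullet> (L *v ?y)" by (simp add: power2_norm_eq_inner adj_sq)
    also have "\<dots> \<le> norm x * norm ((L ** adj L) *v x)"
      by (simp add: matrix_vector_mul_assoc norm_cauchy_schwarz)
    also have "\<dots> \<le> norm x * (opnorm (L ** adj L) * norm x)" by (simp add: mult_left_mono opn)
    finally have "norm ?y ^ 2 \<le> (sqrt (opnorm (L ** adj L)) * norm x) ^ 2"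
      using opn_ge0[of "L ** adj L"] by (simp add: power_mult_distrib power2_eq_square mult_ac)
    then show "norm ?y \<le> sqrt (opnorm (L ** adj L)) * norm x"
      using opn_ge0[of "L ** adj L"] by (meson power2_le_imp_le mult_nonneg_nonneg norm_ge_zero real_sqrt_ge_zero)
  qed
  then show ?thesis by (simp add: opnorm_adj)
qed


lemma quad_zero:
  fixes a c :: real
  assumes "a \<ge> 0" "\<And>t. 0 \<le> 2*t*a + t^2*c"
  shows "a = 0"
proof (rule ccontr)
  assume "a \<noteq> 0" then have a: "a > 0" using assms(1) by simp
  show False
  proof (cases "c \<le> 0")
    case True
    from assms(2)[of "-1"] True a show False by simp
  next
    case False
    from assms(2)[of "-a/c"] False a have "0 \<le> -(a*a)/c"
      by (simp add: power2_eq_square field_simps)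
    moreover have "a*a/c > 0" using a False by simp
    ultimately show False by linarith
  qed
qed

lemma X_sym:
  fixes N :: "complex^'m^'k"
  shows "a \<bullet> ((N ** adj N) *v b) = (adj N *v a) \<bullet> (adj N *v b)"
  by (simp add: matrix_vector_mul_assoc[symmetric] inner_adj[of a N])

lemma X_sym2:
  fixes N :: "complex^'m^'k"
  shows "a \<bullet> ((N ** adj N) *v b) = ((N ** adj N) *v a) \<bullet> b"
  by (simp add: X_sym inner_commute)

lemma rayleigh:
  fixes N :: "complex^'m^'k" and w :: "complex^'k"
  assumes w0: "w \<noteq> 0" and wS: "\<forall>v. adj N *v v = 0 \<longrightarrow> v \<bullet> w = 0"
  shows "\<exists>\<mu> w0. \<mu> > 0 \<and> w0 \<noteq> 0 \<and> (N ** adj N) *v w0 = \<mu> *\<^sub>R w0 \<and> \<mu> * (w \<bullet> w) \<le> w \<bullet> ((N ** adj N) *v w)"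
proof -
  define X where "X = N ** adj N"
  define S where "S = {w. \<forall>v. adj N *v v = 0 \<longrightarrow> v \<bullet> w = 0}"
  define f where "f = (\<lambda>w. w \<bullet> (X *v w))"
  have fsq: "f w = (adj N *v w) \<bullet> (adj N *v w)" for w
    unfolding f_def X_def by (rule X_sym)
  have fge: "f w \<ge> 0" for w by (simp add: fsq)
  have Xsym: "a \<bullet> (X *v b) = (X *v a) \<bullet> b" for a b unfolding X_def by (rule X_sym2)
  have Sclosed: "closed S"
  proof -
    have "S = (\<Inter>v\<in>{v. adj N *v v = 0}. {w. v \<bullet> w = 0})" unfolding S_def by auto
    then show ?thesis by (auto intro!: closed_INT closed_hyperplane)
  qed
  have Sadd: "a \<in> S \<Longrightarrow> b \<in> S \<Longrightarrow> a + t *\<^sub>R b \<in> S" for a b t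
    unfolding S_def by (simp add: inner_add_right)
  define K where "K = S \<inter> sphere 0 1"
  have Kc: "compact K" unfolding K_def using Sclosed by (simp add: closed_Int_compact)
  have wS': "w \<in> S" using wS unfolding S_def by simp
  have "(1 / norm w) *\<^sub>R w \<in> K" unfolding K_def using w0 wS' Sadd[of 0 w "1/norm w"]
    by (auto simp: S_def)
  then have Kne: "K \<noteq> {}" by auto
  have fcont: "continuous_on K f" unfolding f_def
    by (intro continuous_intros bounded_linear.continuous_on[OF matrix_vector_mul_bounded_linear])
  obtain w0 where w0K: "w0 \<in> K" and w0min: "\<And>y. y \<in> K \<Longrightarrow> f w0 \<le> f y"
    using continuous_attains_inf[OF Kc Kne fcont] by blast
  define \<mu> where "\<mu> = f w0"
  have w0S: "w0 \<in> S" and nw0: "norm w0 = 1" using w0K by (auto simp: K_def)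
  have w00: "w0 \<bullet> w0 = 1" using nw0 by (simp add: power2_norm_eq_inner[symmetric])
  have Sbound: "\<mu> * (s \<bullet> s) \<le> f s" if sS: "s \<in> S" for s
  proof (cases "s = 0")
    case True then show ?thesis by (simp add: f_def)
  next
    case False
    let ?s = "(1 / norm s) *\<^sub>R s"
    have "?s \<in> K" unfolding K_def using False sS Sadd[of 0 s "1/norm s"] by (auto simp: S_def)
    then have "\<mu> \<le> f ?s" using w0min \<mu>_def by simp
    also have "f ?s = f s / (norm s)^2"
      unfolding f_def mv_scaleR
      by (simp only: inner_scaleR_left inner_scaleR_right) (simp add: power2_eq_square)
    finally have "\<mu> * (norm s)^2 \<le> f s" using False by (simp add: field_simps)
    then show ?thesis by (simp add: power2_norm_eq_inner)
  qed
  have mupos: "\<mu> > 0"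
  proof (rule ccontr)
    assume "\<not> \<mu> > 0"
    then have "f w0 = 0" using fge[of w0] \<mu>_def by simp
    then have "adj N *v w0 = 0" by (simp add: fsq)
    then have "w0 \<bullet> w0 = 0" using w0S unfolding S_def by blast
    then show False using w00 by simp
  qed
  define r where "r = X *v w0 - \<mu> *\<^sub>R w0"
  have rS: "r \<in> S"
    unfolding S_def mem_Collect_eq
  proof (intro allI impI)
    fix v assume v: "adj N *v v = 0"
    have "v \<bullet> (X *v w0) = 0" unfolding X_def using v by (simp add: X_sym)
    moreover have "v \<bullet> w0 = 0" using w0S v unfolding S_def by blast
    ultimately show "v \<bullet> r = 0" unfolding r_def by (simp add: inner_diff_right)
  qed
  have "r \<bullet> r = 0"
  proof (rule quad_zero)
    show "r \<bullet> r \<ge> 0" by simp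
    fix t :: real
    have "\<mu> * ((w0 + t *\<^sub>R r) \<bullet> (w0 + t *\<^sub>R r)) \<le> f (w0 + t *\<^sub>R r)"
      using Sbound Sadd[OF w0S rS] by blast
    moreover have "f (w0 + t *\<^sub>R r) = f w0 + 2*t*(r \<bullet> (X *v w0)) + t^2 * (r \<bullet> (X *v r))"
      unfolding f_def using Xsym[of w0 r]
      by (simp add: matrix_vector_right_distrib mv_scaleR inner_add_left inner_add_right
          power2_eq_square algebra_simps inner_commute)
    moreover have "(w0 + t *\<^sub>R r) \<bullet> (w0 + t *\<^sub>R r) = 1 + 2*t*(r \<bullet> w0) + t^2 * (r \<bullet> r)"
      using w00 by (simp add: inner_add_left inner_add_right power2_eq_square algebra_simps inner_commute)
    moreover have "r \<bullet> (X *v w0) = r \<bullet> r + \<mu> * (r \<bullet> w0)"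
      unfolding r_def by (simp add: inner_diff_right inner_diff_left algebra_simps)
    ultimately have "\<mu> * (1 + 2*t*(r \<bullet> w0) + t^2 * (r \<bullet> r)) \<le> \<mu> + 2*t*((r \<bullet> r) + \<mu> * (r \<bullet> w0)) + t^2 * (r \<bullet> (X *v r))"
      using \<mu>_def by metis
    then show "0 \<le> 2*t*(r \<bullet> r) + t^2 * (r \<bullet> (X *v r) - \<mu> * (r \<bullet> r))"
      by (simp add: algebra_simps)
  qed
  then have "r = 0" by simp
  then have eig: "X *v w0 = \<mu> *\<^sub>R w0" unfolding r_def by simp
  have "\<mu> * (w \<bullet> w) \<le> f w" using Sbound wS' by blast
  then show ?thesis using mupos eig nw0 unfolding f_def X_def
    by (intro exI[of _ \<mu>] exI[of _ w0]) auto
qed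


lemma core:
  fixes P :: "complex^'k^'n" and Q :: "complex^'m^'n" and lam0 :: real
  assumes eq: "z + (P ** adj P ** (Q ** adj Q)) *v z = x"
    and lam: "lam0 > -1"
    and hyp: "\<And>\<mu> w. \<mu> > 0 \<Longrightarrow> w \<noteq> 0 \<Longrightarrow> ((adj P ** Q) ** adj (adj P ** Q)) *v w = \<mu> *\<^sub>R w \<Longrightarrow> lam0 \<le> \<mu>"
  shows "norm z \<le> norm x + opnorm P * (opnorm (adj P ** (Q ** adj Q)) * norm x) / (1 + lam0)"
proof -
  define N where "N = adj P ** Q"
  define X where "X = N ** adj N"
  define G where "G = adj P ** (Q ** adj Q)"
  define u where "u = G *v z"
  define y where "y = G *v x"
  have adjN: "adj N = adj Q ** P" unfolding N_def by (simp add: adj_mult)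
  have zx: "z = x - P *v u"
    using eq unfolding u_def G_def by (simp add: matrix_vector_mul_assoc[symmetric] matrix_mul_assoc algebra_simps)
  have XG: "X *v u = G *v (P *v u)"
    unfolding X_def G_def adjN unfolding N_def by (simp add: matrix_vector_mul_assoc matrix_mul_assoc)
  have uy: "u + X *v u = y"
  proof -
    have "y = G *v (z + P *v u)" unfolding y_def using zx by simp
    also have "\<dots> = u + X *v u" unfolding XG by (simp add: matrix_vector_right_distrib u_def)
    finally show ?thesis by simp
  qed
  have orth: "\<forall>v. adj N *v v = 0 \<longrightarrow> v \<bullet> u = 0"
  proof (intro allI impI)
    fix v assume v: "adj N *v v = 0"
    have "v \<bullet> (X *v u) = 0" unfolding X_def by (simp add: X_sym v)
    moreover have "v \<bullet> y = 0"
    proof -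
      have "v \<bullet> y = (adj G *v v) \<bullet> x" unfolding y_def by (rule inner_adj)
      also have "adj G = Q ** adj N" unfolding G_def adjN by (simp add: adj_mult matrix_mul_assoc)
      finally show ?thesis using v by (simp add: matrix_vector_mul_assoc[symmetric])
    qed
    ultimately show "v \<bullet> u = 0" using uy by (metis add_diff_cancel inner_diff_right diff_zero)
  qed
  have uy_bound: "(1 + lam0) * norm u \<le> norm y"
  proof (cases "u = 0")
    case True then show ?thesis by simp
  next
    case False
    obtain \<mu> w0 where mu: "\<mu> > 0" "w0 \<noteq> 0" "X *v w0 = \<mu> *\<^sub>R w0"
      and ray: "\<mu> * (u \<bullet> u) \<le> u \<bullet> (X *v u)"
      using rayleigh[OF False orth] unfolding X_def by blast
    have "lam0 \<le> \<mu>" using hyp[OF mu(1,2)] mu(3) unfolding X_def N_def by blast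
    have uu: "u \<bullet> u = norm u ^ 2" by (simp add: power2_norm_eq_inner)
    have "u \<bullet> y = u \<bullet> u + u \<bullet> (X *v u)" using uy by (metis inner_add_right)
    also have "\<dots> \<ge> (1 + lam0) * (u \<bullet> u)"
      using ray \<open>lam0 \<le> \<mu>\<close> mult_right_mono[OF \<open>lam0 \<le> \<mu>\<close>, of "u \<bullet> u"] by (simp add: algebra_simps)
    finally have "(1 + lam0) * norm u ^ 2 \<le> norm u * norm y"
      using norm_cauchy_schwarz[of u y] uu by (metis order_trans)
    then have "((1 + lam0) * norm u) * norm u \<le> norm y * norm u" by (simp add: power2_eq_square mult_ac)
    then show ?thesis using False by (simp add: mult_le_cancel_right)
  qed
  have lp: "1 + lam0 > 0" using lam by simp
  have nu: "norm u \<le> opnorm G * norm x / (1 + lam0)"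
    using uy_bound opn[of G x] lp unfolding y_def by (simp add: field_simps)
  have "norm z \<le> norm x + norm (P *v u)" unfolding zx by (rule norm_triangle_ineq4)
  also have "\<dots> \<le> norm x + opnorm P * norm u" using opn[of P u] by simp
  also have "\<dots> \<le> norm x + opnorm P * (opnorm G * norm x / (1 + lam0))"
    using mult_left_mono[OF nu opn_ge0[of P]] by simp
  finally show ?thesis unfolding G_def by simp
qed


lemma spec_iff: "z \<in> spectrum P \<longleftrightarrow> (\<exists>v. v \<noteq> 0 \<and> P *v v = z *s v)"
proof -
  have "invertible (P - mat z) \<longleftrightarrow> (\<forall>x. (P - mat z) *v x = 0 \<longrightarrow> x = 0)"
    by (simp add: invertible_left_inverse matrix_left_invertible_ker)
  moreover have "(P - mat z) *v x = P *v x - z *s x" for x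
    by (simp add: matrix_vector_mult_diff_rdistrib mat_mulv)
  ultimately show ?thesis unfolding spectrum_def by auto
qed

lemma to_X:
  fixes P :: "complex^'k^'n" and Q :: "complex^'m^'n"
  assumes "z \<in> spectrum (P ** adj P ** (Q ** adj Q))" "z \<noteq> 0"
  shows "\<exists>u. u \<noteq> 0 \<and> ((adj P ** Q) ** adj (adj P ** Q)) *v u = z *s u"
proof -
  obtain v where v: "v \<noteq> 0" "(P ** adj P ** (Q ** adj Q)) *v v = z *s v" using assms(1) spec_iff by blast
  define G where "G = adj P ** (Q ** adj Q)"
  define u where "u = G *v v"
  have Pu: "P *v u = z *s v" using v(2) unfolding u_def G_def by (simp add: matrix_vector_mul_assoc matrix_mul_assoc)
  have u0: "u \<noteq> 0" using Pu v(1) assms(2) by (auto simp: vector_mul_eq_0)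
  have "((adj P ** Q) ** adj (adj P ** Q)) = G ** P" unfolding G_def by (simp add: adj_mult matrix_mul_assoc)
  then have "((adj P ** Q) ** adj (adj P ** Q)) *v u = G *v (P *v u)"
    by (simp add: matrix_vector_mul_assoc)
  also have "\<dots> = z *s u" unfolding Pu by (simp add: vector_scalar_commute u_def)
  finally have "((adj P ** Q) ** adj (adj P ** Q)) *v u = z *s u" .
  then show ?thesis using u0 by blast
qed

lemma from_X:
  fixes P :: "complex^'k^'n" and Q :: "complex^'m^'n"
  assumes "((adj P ** Q) ** adj (adj P ** Q)) *v w = c *s w" "c \<noteq> 0" "w \<noteq> 0"
  shows "c \<in> spectrum (P ** adj P ** (Q ** adj Q))"
proof -
  define G where "G = adj P ** (Q ** adj Q)"
  have XG: "((adj P ** Q) ** adj (adj P ** Q)) = G ** P" unfolding G_def by (simp add: adj_mult matrix_mul_assoc)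
  have GP: "G *v (P *v w) = c *s w" using assms(1) unfolding XG by (simp add: matrix_vector_mul_assoc)
  have P0: "P *v w \<noteq> 0"
  proof
    assume "P *v w = 0" then have "c *s w = 0" using GP by simp
    then show False using assms(2,3) by (simp add: vector_mul_eq_0)
  qed
  have "(P ** adj P ** (Q ** adj Q)) *v (P *v w) = c *s (P *v w)"
    using GP unfolding G_def by (simp add: matrix_vector_mul_assoc[symmetric] matrix_mul_assoc vector_scalar_commute)
  then show ?thesis using P0 spec_iff by blast
qed

lemma spec_swap:
  fixes A C :: "complex^'n^'n"
  assumes "z \<in> spectrum (C ** A)" "z \<noteq> 0"
  shows "z \<in> spectrum (A ** C)"
proof -
  obtain v where v: "v \<noteq> 0" "(C ** A) *v v = z *s v" using assms(1) spec_iff by blast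
  have A0: "A *v v \<noteq> 0"
  proof
    assume "A *v v = 0" then have "z *s v = 0" using v(2) by (simp add: matrix_vector_mul_assoc[symmetric])
    then show False using assms(2) v(1) by (simp add: vector_mul_eq_0)
  qed
  have "(A ** C) *v (A *v v) = z *s (A *v v)"
  proof -
    have "(A ** C) *v (A *v v) = A *v ((C ** A) *v v)" by (simp add: matrix_vector_mul_assoc matrix_mul_assoc)
    also have "\<dots> = z *s (A *v v)" using v(2) by (simp add: vector_scalar_commute)
    finally show ?thesis .
  qed
  then show ?thesis using A0 spec_iff by blast
qed

lemma X_real:
  fixes N :: "complex^'m^'k"
  assumes "(N ** adj N) *v u = z *s u" "u \<noteq> 0"
  shows "Im z = 0 \<and> Re z \<ge> 0"
proof -
  have uu: "u \<bullet> u > 0" using assms(2) by simp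
  have "u \<bullet> ((N ** adj N) *v u) \<ge> 0" by (simp add: X_sym)
  moreover have "u \<bullet> ((N ** adj N) *v u) = Re z * (u \<bullet> u)"
    using assms(1) inner_scale_same[of 1 u z] by simp
  ultimately have re: "Re z \<ge> 0" using uu by (simp add: zero_le_mult_iff)
  have "((N ** adj N) *v u) \<bullet> (\<i> *s u) = u \<bullet> ((N ** adj N) *v (\<i> *s u))" by (simp add: X_sym2)
  also have "(N ** adj N) *v (\<i> *s u) = (\<i> * z) *s u" using assms(1) by (simp add: vector_scalar_commute)
  finally have "(z *s u) \<bullet> (\<i> *s u) = (1 *s u) \<bullet> ((\<i> * z) *s u)" using assms(1) by simp
  then have "Im z * (u \<bullet> u) = - Im z * (u \<bullet> u)" by (simp only: inner_scale_same) simp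
  then have "Im z = 0" using uu by simp
  with re show ?thesis by simp
qed

lemma finite_eig:
  fixes N :: "complex^'m^'k"
  shows "finite {z. \<exists>u. u \<noteq> 0 \<and> (N ** adj N) *v u = z *s u}" (is "finite ?E")
proof -
  let ?X = "N ** adj N"
  define e where "e z = (SOME u. u \<noteq> 0 \<and> ?X *v u = z *s u)" for z
  have e: "e z \<noteq> 0 \<and> ?X *v e z = z *s e z" if "z \<in> ?E" for z
    using that unfolding e_def mem_Collect_eq by (rule someI_ex)
  have zr: "z = complex_of_real (Re z)" if "z \<in> ?E" for z
    using X_real[of N "e z" z] e[OF that] by (simp add: complex_eq_iff)
  have eR: "?X *v e z = Re z *\<^sub>R e z" if "z \<in> ?E" for z
    using e[OF that] zr[OF that] by (simp add: scaleR_vc)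
  have inj: "inj_on e ?E"
  proof (rule inj_onI)
    fix z1 z2 assume z: "z1 \<in> ?E" "z2 \<in> ?E" "e z1 = e z2"
    have "Re z1 *\<^sub>R e z1 = ?X *v e z1" using eR[OF z(1)] by simp
    also have "\<dots> = ?X *v e z2" using z(3) by simp
    also have "\<dots> = Re z2 *\<^sub>R e z2" using eR[OF z(2)] by simp
    finally have "Re z1 *\<^sub>R e z1 = Re z2 *\<^sub>R e z1" using z(3) by simp
    then have "Re z1 = Re z2" using e[OF z(1)] by simp
    then show "z1 = z2" by (subst zr[OF z(1)], subst zr[OF z(2)]) simp
  qed
  have "pairwise orthogonal (e ` ?E)"
  proof (rule pairwiseI)
    fix x y assume xy: "x \<in> e ` ?E" "y \<in> e ` ?E" "x \<noteq> y"
    then obtain z1 z2 where z: "z1 \<in> ?E" "z2 \<in> ?E" and xz: "x = e z1" "y = e z2" by blast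
    then have "z1 \<noteq> z2" using xy(3) by auto
    then have ne: "Re z1 \<noteq> Re z2" using zr[OF z(1)] zr[OF z(2)] by auto
    have "(?X *v e z1) \<bullet> e z2 = e z1 \<bullet> (?X *v e z2)" by (simp add: X_sym2)
    then have "Re z1 * (e z1 \<bullet> e z2) = Re z2 * (e z1 \<bullet> e z2)" using eR z by simp
    then have "e z1 \<bullet> e z2 = 0" using ne by simp
    then show "orthogonal x y" unfolding xz by (simp add: orthogonal_def)
  qed
  then have "finite (e ` ?E)" by (rule pairwise_orthogonal_imp_finite)
  then show ?thesis using inj by (rule finite_imageD)
qed


lemma spec_facts:
  fixes P :: "complex^'k^'n" and Q :: "complex^'m^'n"
  shows "finite (spectrum (P ** adj P ** (Q ** adj Q)))"
    and "spectrum (P ** adj P ** (Q ** adj Q)) \<noteq> {}"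
    and "\<forall>z\<in>spectrum (P ** adj P ** (Q ** adj Q)). Re z \<ge> 0"
proof -
  let ?Sp = "spectrum (P ** adj P ** (Q ** adj Q))"
  let ?N = "adj P ** Q"
  let ?E = "{z. \<exists>u. u \<noteq> 0 \<and> (?N ** adj ?N) *v u = z *s u}"
  have "?Sp \<subseteq> insert 0 ?E"
  proof
    fix z assume z: "z \<in> ?Sp"
    show "z \<in> insert 0 ?E"
    proof (cases "z = 0")
      case False then show ?thesis using to_X[OF z False] by simp
    qed simp
  qed
  then show "finite ?Sp" using finite_eig[of ?N] by (meson finite_insert finite_subset)
  show "\<forall>z\<in>?Sp. Re z \<ge> 0"
  proof
    fix z assume z: "z \<in> ?Sp"
    show "Re z \<ge> 0"
    proof (cases "z = 0")
      case False then obtain u where "u \<noteq> 0" "(?N ** adj ?N) *v u = z *s u" using to_X[OF z False] by blast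
      then show ?thesis using X_real by blast
    qed simp
  qed
  show "?Sp \<noteq> {}"
  proof (cases "\<exists>q. ?N *v q \<noteq> 0")
    case True
    then obtain q where q: "?N *v q \<noteq> 0" by blast
    have orth: "\<forall>v. adj ?N *v v = 0 \<longrightarrow> v \<bullet> (?N *v q) = 0"
      by (simp add: inner_adj[of _ ?N])
    obtain \<mu> w0 where mu: "\<mu> > 0" "w0 \<noteq> 0" "(?N ** adj ?N) *v w0 = \<mu> *\<^sub>R w0"
      using rayleigh[OF q orth] by blast
    have "complex_of_real \<mu> \<in> ?Sp"
      using from_X[of P Q w0 "complex_of_real \<mu>"] mu by (simp add: scaleR_vc)
    then show ?thesis by blast
  next
    case False
    then have N0: "?N *v q = 0" for q by blast
    let ?v = "vec 1 :: complex^'n"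
    have v0: "?v \<noteq> 0" by (simp add: vec_eq_iff)
    have "(P ** adj P ** (Q ** adj Q)) *v ?v = P *v (?N *v (adj Q *v ?v))"
      by (simp add: matrix_vector_mul_assoc matrix_mul_assoc)
    also have "\<dots> = 0 *s ?v" using N0 by simp
    finally have "0 \<in> ?Sp" using v0 spec_iff by blast
    then show ?thesis by blast
  qed
qed


lemma bound_step:
  fixes nz nx oL s oG lam :: real
  assumes "nz \<le> nx + oL * (oG * nx) / (1 + lam)" "oL \<le> s" "0 \<le> oG" "0 \<le> nx" "lam \<ge> 0"
  shows "nz \<le> (1 + s * oG / (1 + lam)) * nx"
proof -
  have "oL * (oG * nx) \<le> s * (oG * nx)" using assms(2-4) by (simp add: mult_right_mono)
  then have "oL * (oG * nx) / (1 + lam) \<le> s * (oG * nx) / (1 + lam)"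
    using assms(5) by (simp add: divide_right_mono)
  moreover have "nx + s * (oG * nx) / (1 + lam) = (1 + s * oG / (1 + lam)) * nx"
    using assms(5) by (simp add: field_simps)
  ultimately show ?thesis using assms(1) by linarith
qed

theorem theorem3p1:
  fixes A C :: "complex^'n^'n" and L :: "complex^'k^'n" and M :: "complex^'m^'n"
  assumes "hermitian_psd A" and "hermitian_psd C"
    and "A = L ** adj L" and "C = M ** adj M"
  shows "invertible (mat 1 + A ** C) \<and>
    opnorm (matrix_inv (mat 1 + A ** C))
      \<le> 1 + min (sqrt (opnorm A) * opnorm (adj L ** C)) (sqrt (opnorm C) * opnorm (A ** M))
             / (1 + min_spectrum (A ** C))"
proof -
  have AC: "A ** C = L ** adj L ** (M ** adj M)" using assms(3,4) by simp
  have CA: "C ** A = M ** adj M ** (L ** adj L)" using assms(3,4) by simp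
  have adjA: "adj A = A" using assms(3) by (simp add: adj_mult)
  have adjC: "adj C = C" using assms(4) by (simp add: adj_mult)
  define lam where "lam = min_spectrum (A ** C)"
  let ?Sp = "spectrum (A ** C)"
  have fin: "finite ?Sp" and ne: "?Sp \<noteq> {}" and nn: "\<forall>z\<in>?Sp. Re z \<ge> 0"
    using spec_facts[of L M] unfolding AC by auto
  have lam0: "lam \<ge> 0" unfolding lam_def min_spectrum_def using fin ne nn
    by (simp add: Min_ge_iff)
  have lamle: "lam \<le> \<mu>" if "complex_of_real \<mu> \<in> ?Sp" for \<mu>
  proof -
    have "\<mu> \<in> Re ` ?Sp" using that by (metis Re_complex_of_real image_eqI)
    then show ?thesis unfolding lam_def min_spectrum_def using fin by simp
  qed
  have hyp1: "lam \<le> \<mu>" if "\<mu> > 0" "w \<noteq> 0" "((adj L ** M) ** adj (adj L ** M)) *v w = \<mu> *\<^sub>R w" for \<mu> w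
  proof -
    have "complex_of_real \<mu> \<in> spectrum (L ** adj L ** (M ** adj M))"
      using from_X[of L M w "complex_of_real \<mu>"] that by (simp add: scaleR_vc)
    then show ?thesis using lamle AC by simp
  qed
  have hyp2: "lam \<le> \<mu>" if "\<mu> > 0" "w \<noteq> 0" "((adj M ** L) ** adj (adj M ** L)) *v w = \<mu> *\<^sub>R w" for \<mu> w
  proof -
    have "complex_of_real \<mu> \<in> spectrum (M ** adj M ** (L ** adj L))"
      using from_X[of M L w "complex_of_real \<mu>"] that by (simp add: scaleR_vc)
    then have "complex_of_real \<mu> \<in> spectrum (C ** A)" using CA by simp
    then have "complex_of_real \<mu> \<in> ?Sp" using spec_swap[of "complex_of_real \<mu>" C A] that(1) by simp
    then show ?thesis using lamle by simp
  qed
  have inv: "invertible (mat 1 + A ** C)"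
    unfolding invertible_left_inverse matrix_left_invertible_ker
  proof (intro allI impI)
    fix z assume "(mat 1 + A ** C) *v z = 0"
    then have "z + (L ** adj L ** (M ** adj M)) *v z = 0"
      by (simp add: matrix_vector_mult_add_rdistrib AC)
    from core[OF this, of 0] have "norm z \<le> 0" by simp
    then show "z = 0" by simp
  qed
  define B where "B = matrix_inv (mat 1 + A ** C)"
  have BI: "(mat 1 + A ** C) ** B = mat 1 \<and> B ** (mat 1 + A ** C) = mat 1"
    using inv unfolding invertible_def B_def matrix_inv_def by (rule someI_ex)
  have lp: "1 + lam > 0" using lam0 by simp
  have b1: "opnorm B \<le> 1 + sqrt (opnorm A) * opnorm (adj L ** C) / (1 + lam)"
  proof -
    have "opnorm B \<le> (1 + sqrt (opnorm A) * opnorm (adj L ** C) / (1 + lam))"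
    proof (rule opn_le)
      fix x
      have "(mat 1 + A ** C) *v (B *v x) = x" using BI by (simp add: matrix_vector_mul_assoc)
      then have "B *v x + (L ** adj L ** (M ** adj M)) *v (B *v x) = x"
        by (simp add: matrix_vector_mult_add_rdistrib AC)
      from core[OF this, of lam] hyp1 lam0
      have "norm (B *v x) \<le> norm x + opnorm L * (opnorm (adj L ** C) * norm x) / (1 + lam)"
        using assms(4) by simp
      then show "norm (B *v x) \<le> (1 + sqrt (opnorm A) * opnorm (adj L ** C) / (1 + lam)) * norm x"
        by (rule bound_step) (use opnorm_sqrt[of L] assms(3) opn_ge0 lam0 in auto)
    qed
    then show ?thesis .
  qed
  have b2: "opnorm B \<le> 1 + sqrt (opnorm C) * opnorm (A ** M) / (1 + lam)"
  proof -
    have aB: "(mat 1 + C ** A) ** adj B = mat 1"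
    proof -
      have "adj (B ** (mat 1 + A ** C)) = adj (mat 1 :: complex^'n^'n)" using BI by simp
      then show ?thesis by (simp add: adj_mult adj_add adj_mat adjA adjC)
    qed
    have "opnorm (adj B) \<le> (1 + sqrt (opnorm C) * opnorm (A ** M) / (1 + lam))"
    proof (rule opn_le)
      fix x
      have "(mat 1 + C ** A) *v (adj B *v x) = x" using aB by (simp add: matrix_vector_mul_assoc)
      then have "adj B *v x + (M ** adj M ** (L ** adj L)) *v (adj B *v x) = x"
        by (simp add: matrix_vector_mult_add_rdistrib CA)
      from core[OF this, of lam] hyp2 lam0
      have "norm (adj B *v x) \<le> norm x + opnorm M * (opnorm (adj M ** (L ** adj L)) * norm x) / (1 + lam)"
        by simp
      moreover have "opnorm (adj M ** (L ** adj L)) = opnorm (A ** M)"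
        using opnorm_adj[of "A ** M"] adjA assms(3) by (simp add: adj_mult)
      ultimately have "norm (adj B *v x) \<le> norm x + opnorm M * (opnorm (A ** M) * norm x) / (1 + lam)"
        by simp
      then show "norm (adj B *v x) \<le> (1 + sqrt (opnorm C) * opnorm (A ** M) / (1 + lam)) * norm x"
        by (rule bound_step) (use opnorm_sqrt[of M] assms(4) opn_ge0 lam0 in auto)
    qed
    then show ?thesis by (simp add: opnorm_adj)
  qed
  have "opnorm B \<le> 1 + min (sqrt (opnorm A) * opnorm (adj L ** C)) (sqrt (opnorm C) * opnorm (A ** M)) / (1 + lam)"
    using b1 b2 by (cases "sqrt (opnorm A) * opnorm (adj L ** C) \<le> sqrt (opnorm C) * opnorm (A ** M)")
      (simp_all add: min_def)
  then show ?thesis using inv unfolding B_def lam_def by simp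
qed

end
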